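(* Let $R=(V,(\rho_i)_{i\in I})$ be a relational structure and $A\subseteq V$. Then: (1) for every monomorphic decomposition $(V_j)_{j\in J}$ of $R$, the non-empty sets among $A\cap V_j$ ($j\in J$) form a monomorphic decomposition of $R_{\restriction A}$; (2) if $R$ has a monomorphic decomposition into finitely many classes and $R$ embeds into $R_{\restriction A}$, then for each class $C$ of $\mathbf M(R)$, the set $A\cap C$ is a class of $\mathbf M(R_{\restriction A})$ and $|A\cap C|=|C|$.
   Context: A relational structure $R=(V,(\rho_i)_{i\in I})$ consists of a set $V$ and relations $\rho_i\subseteq V^{n_i}$, $n_i$ non-negative integers. For $A\subseteq V$, $R_{\restriction A}=(A,(\rho_i\cap A^{n_i})_{i\in I})$. An isomorphism between structures with the same signature is a bijection preserving each relation in both directions; $R$ embeds into $R'$ if $R$ is isomorphic to a restriction of $R'$. A monomorphic decomposition of $R$ is a partition $(V_j)_{j\in J}$ of $V$ into non-empty sets such that for all finite $F,F'\subseteq V$ with $|F\cap V_j|=|F'\cap V_j|$ for every $j\in J$, the restrictions $R_{\restriction F}$ and $R_{\restriction F'}$ are isomorphic. For $x,y\in V$ write $x\simeq_R y$ if for every finite $F\subseteq V\setminus\{x,y\}$ the restrictions $R_{\restriction F\cup\{x\}}$ and $R_{\restriction F\cup\{y\}}$ are isomorphic. It is known that $\simeq_R$ is an equivalence relation whose classes form a monomorphic decomposition of $R$ of which every monomorphic decomposition of $R$ is a refinement; this partition is the canonical decomposition $\mathbf M(R)$. *)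

theory Defs
  imports Main "HOL-Library.Equipollence"
begin

text \<open>A relational structure R = (V, (rho_i)_{i in I}) with signature n :: 'i => nat
  (arity of each relation) is represented by its domain V, the family rho of relations,
  each rho i being a set of lists (tuples) of length n i over V.\<close>

definition rel_struct :: "'a set \<Rightarrow> ('i \<Rightarrow> 'a list set) \<Rightarrow> ('i \<Rightarrow> nat) \<Rightarrow> bool" where
  "rel_struct V \<rho> n \<longleftrightarrow> (\<forall>i. \<forall>xs\<in>\<rho> i. length xs = n i \<and> set xs \<subseteq> V)"

definition restr_rel :: "('i \<Rightarrow> 'a list set) \<Rightarrow> 'a set \<Rightarrow> ('i \<Rightarrow> 'a list set)" where
  "restr_rel \<rho> A = (\<lambda>i. {xs \<in> \<rho> i. set xs \<subseteq> A})"

definition struct_iso_by ::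
  "('a \<Rightarrow> 'b) \<Rightarrow> ('i \<Rightarrow> nat) \<Rightarrow> 'a set \<Rightarrow> ('i \<Rightarrow> 'a list set) \<Rightarrow> 'b set \<Rightarrow> ('i \<Rightarrow> 'b list set) \<Rightarrow> bool" where
  "struct_iso_by f n V \<rho> V' \<rho>' \<longleftrightarrow> bij_betw f V V' \<and>
     (\<forall>i xs. length xs = n i \<and> set xs \<subseteq> V \<longrightarrow> (xs \<in> \<rho> i \<longleftrightarrow> map f xs \<in> \<rho>' i))"

definition struct_iso ::
  "('i \<Rightarrow> nat) \<Rightarrow> 'a set \<Rightarrow> ('i \<Rightarrow> 'a list set) \<Rightarrow> 'b set \<Rightarrow> ('i \<Rightarrow> 'b list set) \<Rightarrow> bool" where
  "struct_iso n V \<rho> V' \<rho>' \<longleftrightarrow> (\<exists>f. struct_iso_by f n V \<rho> V' \<rho>')"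

definition struct_embeds ::
  "('i \<Rightarrow> nat) \<Rightarrow> 'a set \<Rightarrow> ('i \<Rightarrow> 'a list set) \<Rightarrow> 'b set \<Rightarrow> ('i \<Rightarrow> 'b list set) \<Rightarrow> bool" where
  "struct_embeds n V \<rho> V' \<rho>' \<longleftrightarrow> (\<exists>B \<subseteq> V'. struct_iso n V \<rho> B (restr_rel \<rho>' B))"

text \<open>Monomorphic decomposition, given as the set P of its (non-empty, pairwise disjoint) blocks.\<close>
definition monomorphic_decomp ::
  "('i \<Rightarrow> nat) \<Rightarrow> 'a set \<Rightarrow> ('i \<Rightarrow> 'a list set) \<Rightarrow> 'a set set \<Rightarrow> bool" where
  "monomorphic_decomp n V \<rho> P \<longleftrightarrow>
     \<Union>P = V \<and> {} \<notin> P \<and> (\<forall>B\<in>P. \<forall>B'\<in>P. B \<noteq> B' \<longrightarrow> B \<inter> B' = {}) \<and>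
     (\<forall>F F'. finite F \<and> finite F' \<and> F \<subseteq> V \<and> F' \<subseteq> V \<and>
        (\<forall>B\<in>P. card (F \<inter> B) = card (F' \<inter> B)) \<longrightarrow>
        struct_iso n F (restr_rel \<rho> F) F' (restr_rel \<rho> F'))"

definition equiv_R :: "('i \<Rightarrow> nat) \<Rightarrow> 'a set \<Rightarrow> ('i \<Rightarrow> 'a list set) \<Rightarrow> 'a \<Rightarrow> 'a \<Rightarrow> bool" where
  "equiv_R n V \<rho> x y \<longleftrightarrow>
     (\<forall>F. finite F \<and> F \<subseteq> V - {x, y} \<longrightarrow>
        struct_iso n (F \<union> {x}) (restr_rel \<rho> (F \<union> {x})) (F \<union> {y}) (restr_rel \<rho> (F \<union> {y})))"

definition canonical_decomp :: "('i \<Rightarrow> nat) \<Rightarrow> 'a set \<Rightarrow> ('i \<Rightarrow> 'a list set) \<Rightarrow> 'a set set" where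
  "canonical_decomp n V \<rho> = V // {(x, y). x \<in> V \<and> y \<in> V \<and> equiv_R n V \<rho> x y}"

end

theory Submission
  imports Defs
begin


lemma restr_restr[simp]: "restr_rel (restr_rel \<rho> X) Y = restr_rel \<rho> (X \<inter> Y)"
  unfolding restr_rel_def by auto

lemma iso_refl: "struct_iso n X \<rho> X \<rho>"
  unfolding struct_iso_def struct_iso_by_def
  by (rule exI[of _ id]) auto

lemma iso_by_inv:
  assumes "struct_iso_by f n X \<rho> Y \<sigma>"
  shows "struct_iso_by (inv_into X f) n Y \<sigma> X \<rho>"
proof -
  have b: "bij_betw f X Y" and r: "\<And>i xs. length xs = n i \<Longrightarrow> set xs \<subseteq> X \<Longrightarrow> (xs \<in> \<rho> i \<longleftrightarrow> map f xs \<in> \<sigma> i)"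
    using assms unfolding struct_iso_by_def by auto
  have bi: "bij_betw (inv_into X f) Y X" using b by (rule bij_betw_inv_into)
  show ?thesis unfolding struct_iso_by_def
  proof (intro conjI bi allI impI)
    fix i ys assume h: "length ys = n i \<and> set ys \<subseteq> Y"
    have s: "set (map (inv_into X f) ys) \<subseteq> X" using h bi by (auto simp: bij_betw_def)
    have m: "map f (map (inv_into X f) ys) = ys"
      using h b by (auto simp: bij_betw_def f_inv_into_f intro!: map_idI)
    show "ys \<in> \<sigma> i \<longleftrightarrow> map (inv_into X f) ys \<in> \<rho> i"
      using r[OF _ s] h m by auto
  qed
qed

lemma iso_sym: "struct_iso n X \<rho> Y \<sigma> \<Longrightarrow> struct_iso n Y \<sigma> X \<rho>"
  unfolding struct_iso_def using iso_by_inv by blast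

lemma iso_by_comp:
  assumes "struct_iso_by f n X \<rho> Y \<sigma>" "struct_iso_by g n Y \<sigma> Z \<tau>"
  shows "struct_iso_by (g \<circ> f) n X \<rho> Z \<tau>"
proof -
  have b: "bij_betw f X Y" and r: "\<And>i xs. length xs = n i \<Longrightarrow> set xs \<subseteq> X \<Longrightarrow> (xs \<in> \<rho> i \<longleftrightarrow> map f xs \<in> \<sigma> i)"
    using assms(1) unfolding struct_iso_by_def by auto
  have b2: "bij_betw g Y Z" and r2: "\<And>i xs. length xs = n i \<Longrightarrow> set xs \<subseteq> Y \<Longrightarrow> (xs \<in> \<sigma> i \<longleftrightarrow> map g xs \<in> \<tau> i)"
    using assms(2) unfolding struct_iso_by_def by auto
  show ?thesis unfolding struct_iso_by_def
  proof (intro conjI allI impI)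
    show "bij_betw (g \<circ> f) X Z" using b b2 by (rule bij_betw_trans)
    fix i xs assume h: "length xs = n i \<and> set xs \<subseteq> X"
    have "set (map f xs) \<subseteq> Y" using h b by (auto simp: bij_betw_def)
    then show "xs \<in> \<rho> i \<longleftrightarrow> map (g \<circ> f) xs \<in> \<tau> i"
      using r[of xs i] r2[of "map f xs" i] h by simp
  qed
qed

lemma iso_trans: "struct_iso n X \<rho> Y \<sigma> \<Longrightarrow> struct_iso n Y \<sigma> Z \<tau> \<Longrightarrow> struct_iso n X \<rho> Z \<tau>"
  unfolding struct_iso_def using iso_by_comp by blast

lemma iso_by_restr:
  assumes "struct_iso_by f n X \<rho> Y \<sigma>" "F \<subseteq> X"
  shows "struct_iso_by f n F (restr_rel \<rho> F) (f ` F) (restr_rel \<sigma> (f ` F))"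
proof -
  have b: "bij_betw f X Y" and r: "\<And>i xs. length xs = n i \<Longrightarrow> set xs \<subseteq> X \<Longrightarrow> (xs \<in> \<rho> i \<longleftrightarrow> map f xs \<in> \<sigma> i)"
    using assms(1) unfolding struct_iso_by_def by auto
  show ?thesis unfolding struct_iso_by_def
  proof (intro conjI allI impI)
    show "bij_betw f F (f ` F)" using b assms(2) by (meson bij_betw_def bij_betw_subset inj_on_subset)
    fix i xs assume h: "length xs = n i \<and> set xs \<subseteq> F"
    then show "xs \<in> restr_rel \<rho> F i \<longleftrightarrow> map f xs \<in> restr_rel \<sigma> (f ` F) i"
      using r[of xs i] assms(2) unfolding restr_rel_def by auto
  qed
qed

lemma equiv_refl: "equiv_R n W \<rho> x x"
  unfolding equiv_R_def using iso_refl by blast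

lemma equiv_sym: "equiv_R n W \<rho> x y \<Longrightarrow> equiv_R n W \<rho> y x"
  unfolding equiv_R_def using iso_sym by (metis insert_commute)

lemma equiv_trans:
  assumes xy: "equiv_R n W \<rho> x y" and yz: "equiv_R n W \<rho> y z" and W: "x \<in> W" "y \<in> W" "z \<in> W"
  shows "equiv_R n W \<rho> x z"
  unfolding equiv_R_def
proof (intro allI impI)
  fix F assume F: "finite F \<and> F \<subseteq> W - {x, z}"
  show "struct_iso n (F \<union> {x}) (restr_rel \<rho> (F \<union> {x})) (F \<union> {z}) (restr_rel \<rho> (F \<union> {z}))"
  proof (cases "x = z")
    case True then show ?thesis using iso_refl by simp
  next
    case xz: False
    show ?thesis
    proof (cases "y \<in> F")
      case False
      have 1: "struct_iso n (F \<union> {x}) (restr_rel \<rho> (F \<union> {x})) (F \<union> {y}) (restr_rel \<rho> (F \<union> {y}))"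
        using xy F False unfolding equiv_R_def by auto
      have 2: "struct_iso n (F \<union> {y}) (restr_rel \<rho> (F \<union> {y})) (F \<union> {z}) (restr_rel \<rho> (F \<union> {z}))"
        using yz F False unfolding equiv_R_def by auto
      show ?thesis using iso_trans[OF 1 2] .
    next
      case True
      define G where "G = F - {y}"
      have yx: "y \<noteq> x" "y \<noteq> z" using True F by auto
      have Fe: "F = G \<union> {y}" using True G_def by auto
      have G: "finite G" "G \<subseteq> W - {x,y,z}" using F G_def by auto
      have 1: "struct_iso n ((G \<union> {x}) \<union> {y}) (restr_rel \<rho> ((G \<union> {x}) \<union> {y})) ((G \<union> {x}) \<union> {z}) (restr_rel \<rho> ((G \<union> {x}) \<union> {z}))"
        using yz G W xz yx unfolding equiv_R_def by auto
      have 2: "struct_iso n ((G \<union> {z}) \<union> {x}) (restr_rel \<rho> ((G \<union> {z}) \<union> {x})) ((G \<union> {z}) \<union> {y}) (restr_rel \<rho> ((G \<union> {z}) \<union> {y}))"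
        using xy G W xz yx unfolding equiv_R_def by auto
      have e1: "G \<union> {x} \<union> {z} = G \<union> {z} \<union> {x}" by auto
      have e2: "F \<union> {x} = G \<union> {x} \<union> {y}" "F \<union> {z} = G \<union> {z} \<union> {y}" using Fe by auto
      show ?thesis unfolding e2 using iso_trans[OF 1 2[folded e1]] .
    qed
  qed
qed

lemma equiv_mono:
  assumes "equiv_R n W' \<rho> x y" "W \<subseteq> W'" "x \<in> W" "y \<in> W"
  shows "equiv_R n W (restr_rel \<rho> W) x y"
  unfolding equiv_R_def
proof (intro allI impI)
  fix F assume F: "finite F \<and> F \<subseteq> W - {x, y}"
  have e: "W \<inter> (F \<union> {x}) = F \<union> {x}" "W \<inter> (F \<union> {y}) = F \<union> {y}" using F assms by auto
  show "struct_iso n (F \<union> {x}) (restr_rel (restr_rel \<rho> W) (F \<union> {x})) (F \<union> {y}) (restr_rel (restr_rel \<rho> W) (F \<union> {y}))"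
    unfolding restr_restr e using assms(1) F assms(2) unfolding equiv_R_def by blast
qed

lemma equiv_iso_dir:
  assumes f: "struct_iso_by f n X \<rho> Y \<sigma>" and x: "x \<in> X" "y \<in> X" and e: "equiv_R n X \<rho> x y"
  shows "equiv_R n Y \<sigma> (f x) (f y)"
  unfolding equiv_R_def
proof (intro allI impI)
  have b: "bij_betw f X Y" using f unfolding struct_iso_by_def by auto
  fix F' assume F': "finite F' \<and> F' \<subseteq> Y - {f x, f y}"
  define F where "F = {z \<in> X. f z \<in> F'}"
  have fF: "f ` F = F'" using F' b unfolding F_def bij_betw_def by auto
  have Fs: "F \<subseteq> X - {x, y}" using F' unfolding F_def by auto
  have Ff: "finite F" using F' fF b Fs
    by (metis Diff_subset bij_betw_def finite_image_iff inj_on_subset)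
  have 1: "struct_iso n (F \<union> {x}) (restr_rel \<rho> (F \<union> {x})) (F \<union> {y}) (restr_rel \<rho> (F \<union> {y}))"
    using e Fs Ff unfolding equiv_R_def by blast
  have 2: "struct_iso n (F \<union> {x}) (restr_rel \<rho> (F \<union> {x})) (F' \<union> {f x}) (restr_rel \<sigma> (F' \<union> {f x}))"
    using iso_by_restr[OF f, of "F \<union> {x}"] Fs x fF unfolding struct_iso_def by auto
  have 3: "struct_iso n (F \<union> {y}) (restr_rel \<rho> (F \<union> {y})) (F' \<union> {f y}) (restr_rel \<sigma> (F' \<union> {f y}))"
    using iso_by_restr[OF f, of "F \<union> {y}"] Fs x fF unfolding struct_iso_def by auto
  show "struct_iso n (F' \<union> {f x}) (restr_rel \<sigma> (F' \<union> {f x})) (F' \<union> {f y}) (restr_rel \<sigma> (F' \<union> {f y}))"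
    using iso_trans[OF iso_trans[OF iso_sym[OF 2] 1] 3] .
qed

lemma equiv_iso:
  assumes f: "struct_iso_by f n X \<rho> Y \<sigma>" and x: "x \<in> X" "y \<in> X"
  shows "equiv_R n X \<rho> x y \<longleftrightarrow> equiv_R n Y \<sigma> (f x) (f y)"
proof
  show "equiv_R n X \<rho> x y \<Longrightarrow> equiv_R n Y \<sigma> (f x) (f y)" using equiv_iso_dir[OF f x] .
  have b: "bij_betw f X Y" using f unfolding struct_iso_by_def by auto
  assume "equiv_R n Y \<sigma> (f x) (f y)"
  from equiv_iso_dir[OF iso_by_inv[OF f] _ _ this] show "equiv_R n X \<rho> x y"
    using b x by (auto simp: bij_betw_def)
qed





lemma factor_pt:
  assumes k: "\<forall>x\<in>X. \<forall>y\<in>X. p x = p y \<longrightarrow> q x = q y" and that: "x \<in> X"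
  shows "q x = q (SOME x'. x' \<in> X \<and> p x' = p x)"
  proof -
    have "\<exists>x'. x' \<in> X \<and> p x' = p x" using that by blast
    then have "(SOME x'. x' \<in> X \<and> p x' = p x) \<in> X \<and> p (SOME x'. x' \<in> X \<and> p x' = p x) = p x"
      by (rule someI_ex)
    then show ?thesis using k that by metis
  qed

lemma img_factor:
  assumes k: "\<forall>x\<in>X. \<forall>y\<in>X. p x = p y \<longrightarrow> q x = q y"
  shows "q ` X = (\<lambda>c. q (SOME x. x \<in> X \<and> p x = c)) ` (p ` X)"
proof -
  have "q x = q (SOME x'. x' \<in> X \<and> p x' = p x)" if "x \<in> X" for x
    using factor_pt[OF k that] .
  then show ?thesis by (auto simp: image_image)
qed

lemma count_le:
  assumes "finite (p ` X)" "\<forall>x\<in>X. \<forall>y\<in>X. p x = p y \<longrightarrow> q x = q y"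
  shows "finite (q ` X) \<and> card (q ` X) \<le> card (p ` X)"
  using img_factor[OF assms(2)] assms(1) by (metis card_image_le finite_imageI)

lemma count_eq:
  assumes "finite (p ` X)" "\<forall>x\<in>X. \<forall>y\<in>X. p x = p y \<longrightarrow> q x = q y"
    and "card (q ` X) = card (p ` X)"
  shows "\<forall>x\<in>X. \<forall>y\<in>X. q x = q y \<longrightarrow> p x = p y"
proof (intro ballI impI)
  define h where "h = (\<lambda>c. q (SOME x. x \<in> X \<and> p x = c))"
  have e: "q ` X = h ` (p ` X)" using img_factor[OF assms(2)] h_def by simp
  have inj: "inj_on h (p ` X)" using eq_card_imp_inj_on[OF assms(1)] e assms(3) by simp
  fix x y assume "x \<in> X" "y \<in> X" "q x = q y"
  moreover have "q z = h (p z)" if "z \<in> X" for z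
    using factor_pt[OF assms(2) that] h_def by simp
  ultimately show "p x = p y" using inj by (metis image_eqI inj_onD)
qed

lemma cls_eq:
  assumes "\<And>x y z. x \<in> X \<Longrightarrow> y \<in> X \<Longrightarrow> z \<in> X \<Longrightarrow> R x y \<Longrightarrow> R y z \<Longrightarrow> R x z"
    "\<And>x y. R x y \<Longrightarrow> R y x" "\<And>x. R x x" "x \<in> X" "y \<in> X"
  shows "{z \<in> X. R x z} = {z \<in> X. R y z} \<longleftrightarrow> R x y"
  using assms by blast




lemma block_equiv:
  assumes P: "monomorphic_decomp n V \<rho> P" and B: "B \<in> P" and xy: "x \<in> B" "y \<in> B"
  shows "equiv_R n V \<rho> x y"
  unfolding equiv_R_def
proof (intro allI impI)
  fix F assume F: "finite F \<and> F \<subseteq> V - {x, y}"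
  have U: "\<Union>P = V" and D: "\<forall>B\<in>P. \<forall>B'\<in>P. B \<noteq> B' \<longrightarrow> B \<inter> B' = {}"
    and M: "\<And>F F'. finite F \<Longrightarrow> finite F' \<Longrightarrow> F \<subseteq> V \<Longrightarrow> F' \<subseteq> V \<Longrightarrow>
        (\<forall>B\<in>P. card (F \<inter> B) = card (F' \<inter> B)) \<Longrightarrow>
        struct_iso n F (restr_rel \<rho> F) F' (restr_rel \<rho> F')"
    using P unfolding monomorphic_decomp_def by blast+
  have xV: "x \<in> V" "y \<in> V" using U B xy by auto
  show "struct_iso n (F \<union> {x}) (restr_rel \<rho> (F \<union> {x})) (F \<union> {y}) (restr_rel \<rho> (F \<union> {y}))"
  proof (rule M)
    show "\<forall>B'\<in>P. card ((F \<union> {x}) \<inter> B') = card ((F \<union> {y}) \<inter> B')"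
    proof
      fix B' assume B': "B' \<in> P"
      show "card ((F \<union> {x}) \<inter> B') = card ((F \<union> {y}) \<inter> B')"
      proof (cases "B' = B")
        case True
        have "(F \<union> {x}) \<inter> B' = insert x (F \<inter> B)" "(F \<union> {y}) \<inter> B' = insert y (F \<inter> B)"
          using True xy by auto
        then show ?thesis using F by (auto simp: card_insert_if)
      next
        case False
        then have "x \<notin> B'" "y \<notin> B'" using D B B' xy by auto
        then have "(F \<union> {x}) \<inter> B' = F \<inter> B'" "(F \<union> {y}) \<inter> B' = F \<inter> B'" by auto
        then show ?thesis by simp
      qed
    qed
  qed (use F xV in auto)
qed

lemma part1:
  assumes P: "monomorphic_decomp n V \<rho> P" and A: "A \<subseteq> V"
  shows "monomorphic_decomp n A (restr_rel \<rho> A) ((\<lambda>B. A \<inter> B) ` P - {{}})"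
proof -
  have U: "\<Union>P = V" and D: "\<forall>B\<in>P. \<forall>B'\<in>P. B \<noteq> B' \<longrightarrow> B \<inter> B' = {}"
    and M: "\<And>F F'. finite F \<Longrightarrow> finite F' \<Longrightarrow> F \<subseteq> V \<Longrightarrow> F' \<subseteq> V \<Longrightarrow>
        (\<forall>B\<in>P. card (F \<inter> B) = card (F' \<inter> B)) \<Longrightarrow>
        struct_iso n F (restr_rel \<rho> F) F' (restr_rel \<rho> F')"
    using P unfolding monomorphic_decomp_def by blast+
  show ?thesis unfolding monomorphic_decomp_def
  proof (intro conjI allI impI)
    show "\<Union> ((\<inter>) A ` P - {{}}) = A" using U A by blast
    show "{} \<notin> (\<inter>) A ` P - {{}}" by auto
    show "\<forall>B\<in>(\<inter>) A ` P - {{}}. \<forall>B'\<in>(\<inter>) A ` P - {{}}. B \<noteq> B' \<longrightarrow> B \<inter> B' = {}"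
    proof (intro ballI impI)
      fix X Y assume X: "X \<in> (\<inter>) A ` P - {{}}" and Y: "Y \<in> (\<inter>) A ` P - {{}}" and ne: "X \<noteq> Y"
      obtain B where B: "B \<in> P" "X = A \<inter> B" using X by blast
      obtain B' where B': "B' \<in> P" "Y = A \<inter> B'" using Y by blast
      have "B \<noteq> B'" using ne B B' by blast
      then have "B \<inter> B' = {}" using D B B' by blast
      then show "X \<inter> Y = {}" using B B' by blast
    qed
    fix F F' assume h: "finite F \<and> finite F' \<and> F \<subseteq> A \<and> F' \<subseteq> A \<and>
       (\<forall>B\<in>(\<inter>) A ` P - {{}}. card (F \<inter> B) = card (F' \<inter> B))"
    have "\<forall>B\<in>P. card (F \<inter> B) = card (F' \<inter> B)"
    proof
      fix B assume B: "B \<in> P"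
      have e: "F \<inter> B = F \<inter> (A \<inter> B)" "F' \<inter> B = F' \<inter> (A \<inter> B)" using h by auto
      show "card (F \<inter> B) = card (F' \<inter> B)"
      proof (cases "A \<inter> B = {}")
        case True then show ?thesis unfolding e by simp
      next
        case False
        then have "A \<inter> B \<in> (\<inter>) A ` P - {{}}" using B by blast
        then show ?thesis unfolding e using h by blast
      qed
    qed
    then have "struct_iso n F (restr_rel \<rho> F) F' (restr_rel \<rho> F')"
      using M[of F F'] h A by auto
    moreover have "A \<inter> F = F" "A \<inter> F' = F'" using h by auto
    ultimately show "struct_iso n F (restr_rel (restr_rel \<rho> A) F) F' (restr_rel (restr_rel \<rho> A) F')"
      by simp
  qed
qed




lemma iter_in: "\<sigma> ` S \<subseteq> S \<Longrightarrow> D \<in> S \<Longrightarrow> (\<sigma> ^^ k) D \<in> S"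
  by (induction k) auto

lemma cancel:
  assumes "\<sigma> ` S \<subseteq> S" "inj_on \<sigma> S" "D \<in> S"
  shows "\<forall>j. i < j \<longrightarrow> (\<sigma> ^^ i) D = (\<sigma> ^^ j) D \<longrightarrow> (\<exists>m>0. (\<sigma> ^^ m) D = D)"
proof (induction i)
  case 0 then show ?case by auto
next
  case (Suc i)
  show ?case
  proof (intro allI impI)
    fix j assume j: "Suc i < j" "(\<sigma> ^^ Suc i) D = (\<sigma> ^^ j) D"
    obtain j' where j': "j = Suc j'" using j by (cases j) auto
    have "\<sigma> ((\<sigma> ^^ i) D) = \<sigma> ((\<sigma> ^^ j') D)" using j j' by simp
    then have "(\<sigma> ^^ i) D = (\<sigma> ^^ j') D"
      using inj_onD[OF assms(2) _ iter_in[OF assms(1,3)] iter_in[OF assms(1,3)]] by blast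
    moreover have "i < j'" using j j' by simp
    ultimately show "\<exists>m>0. (\<sigma> ^^ m) D = D" using Suc.IH by blast
  qed
qed

lemma perm_period:
  assumes "\<sigma> ` S \<subseteq> S" "inj_on \<sigma> S" "D \<in> S" "finite S"
  shows "\<exists>m>0. (\<sigma> ^^ m) D = D"
proof -
  define g where "g = (\<lambda>j. (\<sigma> ^^ j) D)"
  have "g ` {0..card S} \<subseteq> S" using iter_in assms g_def by auto
  then have "card (g ` {0..card S}) \<le> card S" using assms(4) card_mono by blast
  then have "\<not> inj_on g {0..card S}" using pigeonhole[where A="{0..card S}" and f=g] by simp
  then obtain i j where "i \<in> {0..card S}" "j \<in> {0..card S}" "i \<noteq> j" "g i = g j"
    unfolding inj_on_def by blast
  note c = cancel[OF assms(1-3)]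
  show ?thesis
  proof (cases "i < j")
    case True
    have "(\<sigma> ^^ i) D = (\<sigma> ^^ j) D" using \<open>g i = g j\<close> g_def by simp
    then show ?thesis using c[of i] True by blast
  next
    case False then have "j < i" using \<open>i \<noteq> j\<close> by simp
    moreover have "(\<sigma> ^^ j) D = (\<sigma> ^^ i) D" using \<open>g i = g j\<close> g_def by simp
    ultimately show ?thesis using c[of j] by blast
  qed
qed

lemma iter_lepoll:
  assumes "\<sigma> ` S \<subseteq> S" "\<And>D. D \<in> S \<Longrightarrow> \<sigma> D \<lesssim> D"
  shows "D \<in> S \<Longrightarrow> (\<sigma> ^^ k) D \<lesssim> D"
proof (induction k)
  case 0 then show ?case by simp
next
  case (Suc k)
  have "(\<sigma> ^^ Suc k) D = \<sigma> ((\<sigma> ^^ k) D)" by simp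
  also have "\<dots> \<lesssim> (\<sigma> ^^ k) D" by (rule assms(2)[OF iter_in[OF assms(1) Suc.prems]])
  also have "\<dots> \<lesssim> D" by (rule Suc.IH[OF Suc.prems])
  finally show ?case .
qed

lemma perm_lepoll:
  assumes "\<sigma> ` S \<subseteq> S" "inj_on \<sigma> S" "D \<in> S" "finite S" "\<And>D. D \<in> S \<Longrightarrow> \<sigma> D \<lesssim> D"
  shows "D \<lesssim> \<sigma> D"
proof -
  obtain m where m: "m > 0" "(\<sigma> ^^ m) D = D" using perm_period[OF assms(1-4)] by blast
  then obtain m' where "m = Suc m'" by (cases m) auto
  then have "D = (\<sigma> ^^ m') (\<sigma> D)" using m by (metis comp_apply funpow_Suc_right)
  also have "\<dots> \<lesssim> \<sigma> D" using iter_lepoll[OF assms(1,5)] assms(1,3) by blast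
  finally show ?thesis .
qed





theorem proposition4p3:
  fixes V :: "'a set" and \<rho> :: "'i \<Rightarrow> 'a list set" and n :: "'i \<Rightarrow> nat" and A :: "'a set"
  assumes "rel_struct V \<rho> n" and "A \<subseteq> V"
  shows "(\<forall>P. monomorphic_decomp n V \<rho> P \<longrightarrow>
            monomorphic_decomp n A (restr_rel \<rho> A) ((\<lambda>B. A \<inter> B) ` P - {{}}))
       \<and> ((\<exists>P. monomorphic_decomp n V \<rho> P \<and> finite P) \<and> struct_embeds n V \<rho> A (restr_rel \<rho> A)
            \<longrightarrow> (\<forall>C \<in> canonical_decomp n V \<rho>.
                   A \<inter> C \<in> canonical_decomp n A (restr_rel \<rho> A) \<and> A \<inter> C \<approx> C))"
proof (intro conjI allI impI ballI)
  fix P assume "monomorphic_decomp n V \<rho> P"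
  then show "monomorphic_decomp n A (restr_rel \<rho> A) ((\<lambda>B. A \<inter> B) ` P - {{}})"
    using part1 assms(2) by blast
next
  fix C
  assume H: "(\<exists>P. monomorphic_decomp n V \<rho> P \<and> finite P) \<and> struct_embeds n V \<rho> A (restr_rel \<rho> A)"
    and CM: "C \<in> canonical_decomp n V \<rho>"
  obtain P where P: "monomorphic_decomp n V \<rho> P" "finite P" using H by blast
  obtain B where B: "B \<subseteq> A" "struct_iso n V \<rho> B (restr_rel (restr_rel \<rho> A) B)"
    using H unfolding struct_embeds_def by blast
  have AB: "A \<inter> B = B" using B by blast
  obtain f where f: "struct_iso_by f n V \<rho> B (restr_rel \<rho> B)"
    using B(2) unfolding struct_iso_def restr_restr AB by blast
  have bf: "bij_betw f V B" using f unfolding struct_iso_by_def by blast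
  have fV: "f ` V = B" and injf: "inj_on f V" using bf unfolding bij_betw_def by auto
  have fin: "\<And>x. x \<in> V \<Longrightarrow> f x \<in> B" using fV by blast
  have BV: "B \<subseteq> V" using B assms(2) by blast
  define E where "E = equiv_R n V \<rho>"
  define EA where "EA = equiv_R n A (restr_rel \<rho> A)"
  define EB where "EB = equiv_R n B (restr_rel \<rho> B)"
  define p where "p = (\<lambda>x. {y \<in> V. E x y})"
  define pA where "pA = (\<lambda>x. {y \<in> A. EA x y})"
  define pB where "pB = (\<lambda>x. {y \<in> B. EB x y})"
  have pk: "\<And>x y. x \<in> V \<Longrightarrow> y \<in> V \<Longrightarrow> p x = p y \<longleftrightarrow> E x y"
    unfolding p_def E_def by (rule cls_eq) (auto intro: equiv_trans equiv_sym equiv_refl)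
  have pAk: "\<And>x y. x \<in> A \<Longrightarrow> y \<in> A \<Longrightarrow> pA x = pA y \<longleftrightarrow> EA x y"
    unfolding pA_def EA_def by (rule cls_eq) (auto intro: equiv_trans equiv_sym equiv_refl)
  have pBk: "\<And>x y. x \<in> B \<Longrightarrow> y \<in> B \<Longrightarrow> pB x = pB y \<longleftrightarrow> EB x y"
    unfolding pB_def EB_def by (rule cls_eq) (auto intro: equiv_trans equiv_sym equiv_refl)
  have Etr: "\<And>x y z. x \<in> V \<Longrightarrow> y \<in> V \<Longrightarrow> z \<in> V \<Longrightarrow> E x y \<Longrightarrow> E y z \<Longrightarrow> E x z"
    unfolding E_def by (rule equiv_trans)
  have Esym: "\<And>x y. E x y \<Longrightarrow> E y x" unfolding E_def by (rule equiv_sym)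
  have K1: "\<And>x y. x \<in> A \<Longrightarrow> y \<in> A \<Longrightarrow> E x y \<Longrightarrow> EA x y"
    unfolding E_def EA_def using equiv_mono[OF _ assms(2)] by blast
  have K2: "\<And>x y. x \<in> B \<Longrightarrow> y \<in> B \<Longrightarrow> EA x y \<Longrightarrow> EB x y"
  proof -
    fix x y assume "x \<in> B" "y \<in> B" "EA x y"
    then have "equiv_R n B (restr_rel (restr_rel \<rho> A) B) x y"
      unfolding EA_def using equiv_mono[OF _ B(1)] by blast
    then show "EB x y" unfolding EB_def restr_restr AB .
  qed
  have K3: "\<And>x y. x \<in> V \<Longrightarrow> y \<in> V \<Longrightarrow> E x y \<longleftrightarrow> EB (f x) (f y)"
    unfolding E_def EB_def by (rule equiv_iso[OF f])
  have finp: "finite (p ` V)"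
  proof -
    have U: "\<Union>P = V" using P(1) unfolding monomorphic_decomp_def by blast
    have "p ` V \<subseteq> (\<lambda>X. p (SOME x. x \<in> X)) ` P"
    proof
      fix c assume "c \<in> p ` V"
      then obtain x where x: "x \<in> V" "c = p x" by blast
      then obtain X where X: "X \<in> P" "x \<in> X" using U by blast
      have s: "(SOME x. x \<in> X) \<in> X" using X by (metis someI_ex)
      have "E x (SOME x. x \<in> X)" unfolding E_def using block_equiv[OF P(1) X(1) X(2) s] .
      moreover have "(SOME x. x \<in> X) \<in> V" using s X U by blast
      ultimately have "p x = p (SOME x. x \<in> X)" using pk x by blast
      then show "c \<in> (\<lambda>X. p (SOME x. x \<in> X)) ` P" using X x by blast
    qed
    then show ?thesis using P(2) finite_subset by blast
  qed
  have kerf1: "\<forall>x\<in>V. \<forall>y\<in>V. p x = p y \<longrightarrow> (pB \<circ> f) x = (pB \<circ> f) y"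
    using pk pBk K3 fin by simp
  have kerf2: "\<forall>x\<in>V. \<forall>y\<in>V. (pB \<circ> f) x = (pB \<circ> f) y \<longrightarrow> p x = p y"
    using pk pBk K3 fin by simp
  have imB: "pB ` B = (pB \<circ> f) ` V" by (metis fV image_comp)
  have c1a: "finite (pB ` B)" "card (pB ` B) \<le> card (p ` V)"
    using count_le[OF finp kerf1] imB by auto
  have c1b: "card (p ` V) \<le> card (pB ` B)"
    using count_le[OF _ kerf2] c1a imB by auto
  have kAp: "\<forall>x\<in>A. \<forall>y\<in>A. p x = p y \<longrightarrow> pA x = pA y"
  proof (intro ballI impI)
    fix x y assume xy: "x \<in> A" "y \<in> A" "p x = p y"
    have "x \<in> V" "y \<in> V" using xy assms(2) by auto
    then have "E x y" using pk xy(3) by blast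
    then have "EA x y" using K1[OF xy(1,2)] by blast
    then show "pA x = pA y" using pAk[OF xy(1,2)] by blast
  qed
  have finpA_A: "finite (pA ` A)" and c3: "card (pA ` A) \<le> card (p ` A)"
  proof -
    have "finite (p ` A)" using finp assms(2) by (meson finite_subset image_mono)
    moreover note kAp
    ultimately show "finite (pA ` A)" "card (pA ` A) \<le> card (p ` A)" using count_le by blast+
  qed
  have finpA_B: "finite (pA ` B)" using finpA_A B(1) by (meson finite_subset image_mono)
  have kBA: "\<forall>x\<in>B. \<forall>y\<in>B. pA x = pA y \<longrightarrow> pB x = pB y"
    using pAk pBk K2 B(1) by blast
  have c2: "card (pB ` B) \<le> card (pA ` B)" using count_le[OF finpA_B kBA] by blast
  have c4: "card (pA ` B) \<le> card (pA ` A)" using finpA_A B(1) by (meson card_mono image_mono)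
  have c5: "card (p ` A) \<le> card (p ` V)" using finp assms(2) by (meson card_mono image_mono)
  have C1: "pA ` B = pA ` A"
  proof -
    have "card (pA ` B) = card (pA ` A)" using c1a c1b c2 c3 c4 c5 by linarith
    then show ?thesis using card_subset_eq[OF finpA_A image_mono[OF B(1)]] by simp
  qed
  have C2: "p ` A = p ` V"
  proof -
    have "card (p ` A) = card (p ` V)" using c1a c1b c2 c3 c4 c5 by linarith
    then show ?thesis using card_subset_eq[OF finp image_mono[OF assms(2)]] by simp
  qed
  have C3: "\<forall>x\<in>A. \<forall>y\<in>A. pA x = pA y \<longrightarrow> p x = p y"
  proof (rule count_eq)
    show "finite (p ` A)" using finp assms(2) by (meson finite_subset image_mono)
    show "\<forall>x\<in>A. \<forall>y\<in>A. p x = p y \<longrightarrow> pA x = pA y" by (rule kAp)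
    show "card (pA ` A) = card (p ` A)" using c1a c1b c2 c3 c4 c5 by linarith
  qed
  have C4: "\<forall>x\<in>B. \<forall>y\<in>B. pB x = pB y \<longrightarrow> pA x = pA y"
  proof -
    have "card (pB ` B) = card (pA ` B)" using c1a c1b c2 c3 c4 c5 by linarith
    then show ?thesis using count_eq[OF finpA_B kBA] by blast
  qed
  have EAE: "E x y" if xy: "x \<in> A" "y \<in> A" "EA x y" for x y
  proof -
    have "pA x = pA y" using pAk[OF xy(1,2)] xy(3) by simp
    then have "p x = p y" using C3 xy(1,2) by blast
    then show ?thesis using pk xy(1,2) assms(2) by blast
  qed
  have EBA: "EA x y" if xy: "x \<in> B" "y \<in> B" "EB x y" for x y
  proof -
    have "pB x = pB y" using pBk[OF xy(1,2)] xy(3) by simp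
    then have "pA x = pA y" using C4 xy(1,2) by blast
    then show ?thesis using pAk xy(1,2) B(1) by blast
  qed
  have Ef: "\<And>x y. x \<in> V \<Longrightarrow> y \<in> V \<Longrightarrow> E x y \<longleftrightarrow> E (f x) (f y)"
  proof -
    fix x y assume xy: "x \<in> V" "y \<in> V"
    have "f x \<in> B" "f y \<in> B" using fin xy by auto
    then have fA: "f x \<in> A" "f y \<in> A" using B(1) by auto
    have "E x y \<longleftrightarrow> EB (f x) (f y)" using K3[OF xy] .
    also have "\<dots> \<longleftrightarrow> EA (f x) (f y)" using K2[OF \<open>f x \<in> B\<close> \<open>f y \<in> B\<close>] EBA[OF \<open>f x \<in> B\<close> \<open>f y \<in> B\<close>] by blast
    also have "\<dots> \<longleftrightarrow> E (f x) (f y)" using K1[OF fA] EAE[OF fA] by blast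
    finally show "E x y \<longleftrightarrow> E (f x) (f y)" .
  qed
  obtain c where c: "c \<in> V" "C = p c"
    using CM unfolding canonical_decomp_def quotient_def p_def E_def by auto
  obtain a where a: "a \<in> A" "p a = p c" using C2 c by (metis imageE imageI)
  have Eca: "E c a" using pk a c assms(2) by blast
  have AC: "A \<inter> C = pA a"
  proof -
    have "E c y \<longleftrightarrow> EA a y" if y: "y \<in> A" for y
    proof -
      have yV: "y \<in> V" "a \<in> V" using y a assms(2) by auto
      have "E c y \<longleftrightarrow> E a y" using Etr[OF c(1) yV(2) yV(1)] Etr[OF yV(2) c(1) yV(1)] Eca Esym by blast
      also have "\<dots> \<longleftrightarrow> EA a y" using K1[OF a(1) y] EAE[OF a(1) y] by blast
      finally show ?thesis .
    qed
    then show ?thesis unfolding c p_def pA_def using assms(2) by blast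
  qed
  show "A \<inter> C \<in> canonical_decomp n A (restr_rel \<rho> A)"
  proof -
    have "{(x, y). x \<in> A \<and> y \<in> A \<and> equiv_R n A (restr_rel \<rho> A) x y} `` {a} = pA a"
      using a unfolding pA_def EA_def by auto
    then show ?thesis unfolding canonical_decomp_def AC using quotientI[OF a(1)] by metis
  qed
  define S where "S = p ` V"
  define \<sigma> where "\<sigma> = (\<lambda>X. {x \<in> V. f x \<in> X})"
  have hit: "\<exists>x0\<in>V. E d (f x0)" if d: "d \<in> V" for d
  proof -
    have "p d \<in> p ` A" using C2 d by simp
    then obtain a' where a': "a' \<in> A" "p d = p a'" by (metis imageE)
    have "pA a' \<in> pA ` B" using C1 a' by simp
    then obtain b where b: "b \<in> B" "pA a' = pA b" by (metis imageE)
    have a'V: "a' \<in> V" and bA: "b \<in> A" and bV: "b \<in> V" using a' b B(1) assms(2) by auto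
    have "EA a' b" using pAk[OF a'(1) bA] b(2) by simp
    then have 1: "E a' b" using EAE[OF a'(1) bA] by simp
    have 2: "E d a'" using pk[OF d a'V] a'(2) by simp
    have "E d b" using Etr[OF d a'V bV 2 1] .
    moreover obtain x0 where "x0 \<in> V" "b = f x0" using b fV by blast
    ultimately show ?thesis by blast
  qed
  have sig_p: "\<sigma> (p d) = p x0" if dx: "d \<in> V" "x0 \<in> V" "E d (f x0)" for d x0
  proof -
    have "E d (f x) \<longleftrightarrow> E x0 x" if x: "x \<in> V" for x
    proof -
      have fxV: "f x \<in> V" "f x0 \<in> V" using fin x dx BV by auto
      have "E x0 x \<longleftrightarrow> E (f x0) (f x)" using Ef[OF dx(2) x] .
      also have "\<dots> \<longleftrightarrow> E d (f x)"
        using Etr[OF dx(1) fxV(2) fxV(1) dx(3)] Etr[OF fxV(2) dx(1) fxV(1) Esym[OF dx(3)]] by blast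
      finally show ?thesis by simp
    qed
    moreover have "f x \<in> V" if "x \<in> V" for x using fin BV that by auto
    ultimately show ?thesis unfolding \<sigma>_def p_def by auto
  qed
  have sS: "\<sigma> ` S \<subseteq> S"
  proof
    fix X assume "X \<in> \<sigma> ` S"
    then obtain d where d: "d \<in> V" "X = \<sigma> (p d)" unfolding S_def by blast
    obtain x0 where "x0 \<in> V" "E d (f x0)" using hit d by blast
    then show "X \<in> S" using sig_p d unfolding S_def by blast
  qed
  have sinj: "inj_on \<sigma> S"
  proof (rule inj_onI)
    fix X Y assume "X \<in> S" "Y \<in> S" and eq: "\<sigma> X = \<sigma> Y"
    then obtain d d' where d: "d \<in> V" "X = p d" "d' \<in> V" "Y = p d'" unfolding S_def by blast
    obtain x0 where x0: "x0 \<in> V" "E d (f x0)" using hit d by blast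
    have "x0 \<in> p x0" using x0 unfolding p_def E_def by (simp add: equiv_refl)
    then have "x0 \<in> \<sigma> X" using sig_p[OF d(1) x0] d(2) by simp
    then have "x0 \<in> \<sigma> Y" using eq by simp
    then have "E d' (f x0)" unfolding \<sigma>_def d p_def by simp
    moreover have fx0V: "f x0 \<in> V" using fin x0(1) BV by auto
    ultimately have "E d d'" using Etr[OF d(1) fx0V d(3) x0(2)] Esym by blast
    then show "X = Y" using pk[OF d(1) d(3)] d(2,4) by simp
  qed
  have sle: "\<sigma> D \<lesssim> D" if "D \<in> S" for D
    unfolding lepoll_def \<sigma>_def by (rule exI[of _ f]) (auto intro: inj_on_subset[OF injf])
  have CS: "C \<in> S" using c S_def by blast
  have finS: "finite S" using finp S_def by simp
  have "C \<lesssim> \<sigma> C" using perm_lepoll[OF sS sinj CS finS sle] .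
  also have "\<sigma> C \<lesssim> A \<inter> C"
    unfolding lepoll_def \<sigma>_def using fin B(1) by (intro exI[of _ f]) (auto intro: inj_on_subset[OF injf])
  finally have "C \<lesssim> A \<inter> C" .
  then show "A \<inter> C \<approx> C" by (simp add: lepoll_antisym subset_imp_lepoll)
qed


end
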